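(* Let $X$ be a finite set and let $\{A_1,\ldots,A_k\}$ and $\{B_1,\ldots,B_k\}$ be two partitions of $X$ with $|A_i|=|B_i|$ for every $i=1,\ldots,k$. Let $\mathcal G=(V,E)$ be the directed graph on the nodes $V=\{1,\ldots,k\}$ in which $(i,j)\in E$ if and only if $A_i\cap B_j\neq\emptyset$. If $(i,j)\in E$, then there exists a directed path from $j$ to $i$.
   Context: A directed path from $i$ to $j$ is a sequence of nodes $i_1i_2\ldots i_q$ with $i_1=i$, $i_q=j$ and $(i_a,i_{a+1})\in E$ for all $a$; the one-node sequence $i$ is a directed path from $i$ to itself. Partition members may be empty. *)

theory Defs
  imports Main
begin

definition is_partition :: "'a set \<Rightarrow> nat \<Rightarrow> (nat \<Rightarrow> 'a set) \<Rightarrow> bool" where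
  "is_partition X k P \<longleftrightarrow>
     (\<Union>i\<in>{1..k}. P i) = X \<and>
     (\<forall>i\<in>{1..k}. \<forall>j\<in>{1..k}. i \<noteq> j \<longrightarrow> P i \<inter> P j = {})"

definition part_graph :: "nat \<Rightarrow> (nat \<Rightarrow> 'a set) \<Rightarrow> (nat \<Rightarrow> 'a set) \<Rightarrow> (nat \<times> nat) set" where
  "part_graph k A B = {(i, j). i \<in> {1..k} \<and> j \<in> {1..k} \<and> A i \<inter> B j \<noteq> {}}"

definition directed_path :: "('v \<times> 'v) set \<Rightarrow> 'v list \<Rightarrow> 'v \<Rightarrow> 'v \<Rightarrow> bool" where
  "directed_path E p i j \<longleftrightarrow>
     p \<noteq> [] \<and> hd p = i \<and> last p = j \<and>
     (\<forall>a. Suc a < length p \<longrightarrow> (p ! a, p ! Suc a) \<in> E)"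

end

theory Submission
  imports Defs
begin

lemma path_of_rtrancl:
  assumes "(x, y) \<in> E\<^sup>*"
  shows "\<exists>p. directed_path E p x y"
  using assms
proof (induction rule: rtrancl_induct)
  case base
  show ?case by (rule exI[of _ "[x]"]) (simp add: directed_path_def)
next
  case (step y z)
  then obtain p where p: "directed_path E p x y" by blast
  have "directed_path E (p @ [z]) x z"
    unfolding directed_path_def
  proof (intro conjI allI impI)
    fix a assume a: "Suc a < length (p @ [z])"
    show "((p @ [z]) ! a, (p @ [z]) ! Suc a) \<in> E"
    proof (cases "Suc a < length p")
      case True
      then show ?thesis using p by (simp add: directed_path_def nth_append)
    next
      case False
      then have "Suc a = length p" using a by simp
      moreover have "p ! a = last p" using p \<open>Suc a = length p\<close>
        unfolding directed_path_def by (metis diff_Suc_1 last_conv_nth)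
      ultimately show ?thesis using p step(2) by (simp add: directed_path_def nth_append)
    qed
  qed (use p in \<open>auto simp: directed_path_def\<close>)
  then show ?case by blast
qed

theorem lemma3p25:
  fixes X :: "'a set" and k :: nat and A B :: "nat \<Rightarrow> 'a set" and i j :: nat
  assumes "finite X"
    and "is_partition X k A"
    and "is_partition X k B"
    and "\<forall>l\<in>{1..k}. card (A l) = card (B l)"
    and "(i, j) \<in> part_graph k A B"
  shows "\<exists>p. directed_path (part_graph k A B) p j i"
proof -
  let ?E = "part_graph k A B"
  define R where "R = {l. (j, l) \<in> ?E\<^sup>*}"
  have A1: "(\<Union>i\<in>{1..k}. A i) = X" and A2: "\<forall>i\<in>{1..k}. \<forall>j\<in>{1..k}. i \<noteq> j \<longrightarrow> A i \<inter> A j = {}"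
    using assms(2) by (auto simp: is_partition_def)
  have B1: "(\<Union>i\<in>{1..k}. B i) = X" and B2: "\<forall>i\<in>{1..k}. \<forall>j\<in>{1..k}. i \<noteq> j \<longrightarrow> B i \<inter> B j = {}"
    using assms(3) by (auto simp: is_partition_def)
  have ik: "i \<in> {1..k}" and jk: "j \<in> {1..k}" and ij: "A i \<inter> B j \<noteq> {}"
    using assms(5) by (auto simp: part_graph_def)
  have Rsub: "R \<subseteq> {1..k}"
  proof
    fix l assume "l \<in> R"
    then have "(j, l) \<in> ?E\<^sup>*" by (simp add: R_def)
    then show "l \<in> {1..k}"
      by (induction rule: rtrancl_induct) (use jk in \<open>auto simp: part_graph_def\<close>)
  qed
  have finR: "finite R" using Rsub finite_subset by blast
  have jR: "j \<in> R" by (simp add: R_def)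
  show ?thesis
  proof (cases "i \<in> R")
    case True
    then have "(j, i) \<in> ?E\<^sup>*" by (simp add: R_def)
    then show ?thesis by (rule path_of_rtrancl)
  next
    case False
    have finA: "\<And>m. m \<in> {1..k} \<Longrightarrow> finite (A m)"
      using A1 assms(1) by (meson UN_upper finite_subset)
    have finB: "\<And>m. m \<in> {1..k} \<Longrightarrow> finite (B m)"
      using B1 assms(1) by (meson UN_upper finite_subset)
    have sub: "(\<Union>m\<in>R. A m) \<subseteq> (\<Union>m\<in>R. B m)"
    proof
      fix x assume "x \<in> (\<Union>m\<in>R. A m)"
      then obtain m where m: "m \<in> R" "x \<in> A m" by blast
      have "x \<in> X" using m A1 Rsub by blast
      then obtain l where l: "l \<in> {1..k}" "x \<in> B l" using B1 by blast
      have "(m, l) \<in> ?E" using m l Rsub by (auto simp: part_graph_def)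
      then have "l \<in> R" using m(1) by (simp add: R_def)
      then show "x \<in> (\<Union>m\<in>R. B m)" using l by blast
    qed
    have cA: "card (\<Union>m\<in>R. A m) = (\<Sum>m\<in>R. card (A m))"
      proof (rule card_UN_disjoint[OF finR])
      show "\<forall>a\<in>R. finite (A a)" using finA Rsub by blast
      show "\<forall>a\<in>R. \<forall>b\<in>R. a \<noteq> b \<longrightarrow> A a \<inter> A b = {}" using A2 Rsub by blast
    qed
    have cB: "card (\<Union>m\<in>R. B m) = (\<Sum>m\<in>R. card (B m))"
      proof (rule card_UN_disjoint[OF finR])
      show "\<forall>a\<in>R. finite (B a)" using finB Rsub by blast
      show "\<forall>a\<in>R. \<forall>b\<in>R. a \<noteq> b \<longrightarrow> B a \<inter> B b = {}" using B2 Rsub by blast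
    qed
    have "(\<Sum>m\<in>R. card (A m)) = (\<Sum>m\<in>R. card (B m))"
      using assms(4) Rsub by (intro sum.cong) auto
    then have eq: "(\<Union>m\<in>R. A m) = (\<Union>m\<in>R. B m)"
      using sub cA cB finR finB Rsub by (intro card_subset_eq) auto
    obtain x where x: "x \<in> A i" "x \<in> B j" using ij by blast
    then have "x \<in> (\<Union>m\<in>R. A m)" using eq jR by blast
    then obtain m where m: "m \<in> R" "x \<in> A m" by blast
    have "m \<noteq> i" using m False by blast
    have "A i \<inter> A m = {}" using A2 m(1) ik Rsub \<open>m \<noteq> i\<close> by blast
    then show ?thesis using m x by blast
  qed
qed

end
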